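(* For all roles $r,s$ and all canonical global types $G$: if $r\neq s$ then $(\mathrm{enc}_s(G))\upharpoonright r = \mathrm{enc}^{r}_{s}(G\upharpoonright r)$.
   Context: Canonical global types: $G::=\mathsf{end}\mid t\mid\mu t.G\mid p\to q:\{l_i:G_i\}_{i\in I}$ ($p\neq q$, $I\neq\emptyset$, distinct labels, contractive equi-recursive). Routed global types additionally allow $p\to q\ \mathrm{via}\ s:\{l_i:G_i\}_{i\in I}$ ($p,q,s$ pairwise distinct): $p$ sends a choice intended for $q$ to router $s$, which forwards it. Local types: $\mathsf{end}\mid t\mid\mu t.T\mid q\oplus\{l_i:T_i\}$ (selection to $q$) $\mid q\,\&\{l_i:T_i\}$ (branching from $q$) $\mid q\oplus_s\{l_i:T_i\}$ (routed selection to $q$ via $s$) $\mid p\,\&_s\{l_i:T_i\}$ (routed branching from $p$ via $s$) $\mid\mathrm{route}\langle p\to q\rangle\{l_i:T_i\}$ (routing). Projection $G\upharpoonright r$: $\mathsf{end}\mapsto\mathsf{end}$, $t\mapsto t$, $\mu t.G\mapsto\mu t.(G\upharpoonright r)$ if $G\upharpoonright r$ is not a type variable, else $\mathsf{end}$; $p\to q:\{l_i:G_i\}\mapsto q\oplus\{l_i:G_i\upharpoonright r\}$ if $r=p$, $p\,\&\{l_i:G_i\upharpoonright r\}$ if $r=q$, $\sqcap_i(G_i\upharpoonright r)$ otherwise; $p\to q\ \mathrm{via}\ s:\{l_i:G_i\}\mapsto q\oplus_s\{\dots\}$ if $r=p$, $p\,\&_s\{\dots\}$ if $r=q$, $\mathrm{route}\langle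 p\to q\rangle\{l_i:G_i\upharpoonright r\}$ if $r=s$, $\sqcap_i(G_i\upharpoonright r)$ otherwise. Merge $\sqcap$: $T\sqcap T=T$; two branchings (plain, or routed with same sender and router) merge to a branching over the union of labels, merging continuations of shared labels; otherwise undefined. Global encoding $\mathrm{enc}_s$: identity on $\mathsf{end}$, $t$; $\mathrm{enc}_s(\mu t.G)=\mu t.\mathrm{enc}_s(G)$; $\mathrm{enc}_s(p\to q:\{l_i:G_i\})=p\to q:\{l_i:\mathrm{enc}_s(G_i)\}$ if $s\in\{p,q\}$, else $p\to q\ \mathrm{via}\ s:\{l_i:\mathrm{enc}_s(G_i)\}$. Local encoding $\mathrm{enc}^q_s(T)$ (of a canonical local type $T$ of role $q$ w.r.t. router $s$): identity on $\mathsf{end}$, $t$; commutes with $\mu t$; $\mathrm{enc}^q_s(p\oplus\{l_i:T_i\})=p\oplus\{l_i:\mathrm{enc}^q_s(T_i)\}$ if $s\in\{p,q\}$, else $p\oplus_s\{l_i:\mathrm{enc}^q_s(T_i)\}$; $\mathrm{enc}^q_s(p\,\&\{l_i:T_i\})=p\,\&\{l_i:\mathrm{enc}^q_s(T_i)\}$ if $s\in\{p,q\}$, else $p\,\&_s\{l_i:\mathrm{enc}^q_s(T_i)\}$. *)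

theory Defs
  imports Main
begin

(* Labels: type 'l (linearly ordered, used only to fix a
   canonical order for the n-ary merge).
   A labelled choice {l_i : X_i}_{i in I} is a partial map 'l => X option
   with finite non-empty domain; labels are distinct by construction. *)

datatype ('r, 'l) gty =
    GEnd
  | GVar nat
  | GRec nat "('r, 'l) gty"
  | GMsg 'r 'r "'l \<Rightarrow> ('r, 'l) gty option"
  | GVia 'r 'r 'r "'l \<Rightarrow> ('r, 'l) gty option"       (* p -> q via s : {l_i : G_i} *)

datatype ('r, 'l) lty =
    LEnd
  | LVar nat
  | LRec nat "('r, 'l) lty"
  | LSel 'r "'l \<Rightarrow> ('r, 'l) lty option"
  | LBra 'r "'l \<Rightarrow> ('r, 'l) lty option"
  | LRSel 'r 'r "'l \<Rightarrow> ('r, 'l) lty option"          (* q (+)_s {..} : target q, router s *)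
  | LRBra 'r 'r "'l \<Rightarrow> ('r, 'l) lty option"          (* p &_s {..} : sender p, router s *)
  | LRoute 'r 'r "'l \<Rightarrow> ('r, 'l) lty option"

fun is_lvar :: "('r, 'l) lty \<Rightarrow> bool" where
  "is_lvar (LVar _) = True"
| "is_lvar _ = False"

fun is_gvar :: "('r, 'l) gty \<Rightarrow> bool" where
  "is_gvar (GVar _) = True"
| "is_gvar _ = False"

inductive canonical :: "('r, 'l) gty \<Rightarrow> bool" where
  "canonical GEnd"
| "canonical (GVar t)"
| "canonical G \<Longrightarrow> \<not> is_gvar G \<Longrightarrow> canonical (GRec t G)"
| "p \<noteq> q \<Longrightarrow> dom b \<noteq> {} \<Longrightarrow> finite (dom b) \<Longrightarrow>
   (\<forall>l g. b l = Some g \<longrightarrow> canonical g) \<Longrightarrow> canonical (GMsg p q b)"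

primrec enc_g :: "'r \<Rightarrow> ('r, 'l) gty \<Rightarrow> ('r, 'l) gty" where
  "enc_g s GEnd = GEnd"
| "enc_g s (GVar t) = GVar t"
| "enc_g s (GRec t G) = GRec t (enc_g s G)"
| "enc_g s (GMsg p q b) =
     (if s = p \<or> s = q then GMsg p q (\<lambda>l. map_option (enc_g s) (b l))
      else GVia p q s (\<lambda>l. map_option (enc_g s) (b l)))"
| "enc_g s (GVia p q s' b) = GVia p q s' (\<lambda>l. map_option (enc_g s) (b l))"

(* Local encoding enc^q_s of a local type of role q w.r.t. router s
   (only the canonical constructors matter; the others are mapped homomorphically) *)
primrec enc_l :: "'r \<Rightarrow> 'r \<Rightarrow> ('r, 'l) lty \<Rightarrow> ('r, 'l) lty" where
  "enc_l q s LEnd = LEnd"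
| "enc_l q s (LVar t) = LVar t"
| "enc_l q s (LRec t T) = LRec t (enc_l q s T)"
| "enc_l q s (LSel p b) =
     (if s = p \<or> s = q then LSel p (\<lambda>l. map_option (enc_l q s) (b l))
      else LRSel p s (\<lambda>l. map_option (enc_l q s) (b l)))"
| "enc_l q s (LBra p b) =
     (if s = p \<or> s = q then LBra p (\<lambda>l. map_option (enc_l q s) (b l))
      else LRBra p s (\<lambda>l. map_option (enc_l q s) (b l)))"
| "enc_l q s (LRSel p s' b) = LRSel p s' (\<lambda>l. map_option (enc_l q s) (b l))"
| "enc_l q s (LRBra p s' b) = LRBra p s' (\<lambda>l. map_option (enc_l q s) (b l))"
| "enc_l q s (LRoute p p' b) = LRoute p p' (\<lambda>l. map_option (enc_l q s) (b l))"

(* Binary merge, as a relation: merge T1 T2 T  means  T1 \<sqinter> T2 = T *)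
inductive merge :: "('r, 'l) lty \<Rightarrow> ('r, 'l) lty \<Rightarrow> ('r, 'l) lty \<Rightarrow> bool" where
  merge_refl: "merge T T T"
| merge_bra: "\<lbrakk> \<forall>l. b1 l = None \<and> b2 l = None \<longrightarrow> b l = None;
               \<forall>l x. b1 l = Some x \<and> b2 l = None \<longrightarrow> b l = Some x;
               \<forall>l y. b1 l = None \<and> b2 l = Some y \<longrightarrow> b l = Some y;
               \<forall>l x y. b1 l = Some x \<and> b2 l = Some y \<longrightarrow> (\<exists>z. b l = Some z \<and> merge x y z) \<rbrakk>
              \<Longrightarrow> merge (LBra p b1) (LBra p b2) (LBra p b)"
| merge_rbra: "\<lbrakk> \<forall>l. b1 l = None \<and> b2 l = None \<longrightarrow> b l = None;
               \<forall>l x. b1 l = Some x \<and> b2 l = None \<longrightarrow> b l = Some x;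
               \<forall>l y. b1 l = None \<and> b2 l = Some y \<longrightarrow> b l = Some y;
               \<forall>l x y. b1 l = Some x \<and> b2 l = Some y \<longrightarrow> (\<exists>z. b l = Some z \<and> merge x y z) \<rbrakk>
              \<Longrightarrow> merge (LRBra p s b1) (LRBra p s b2) (LRBra p s b)"

inductive merge_list :: "('r, 'l) lty list \<Rightarrow> ('r, 'l) lty \<Rightarrow> bool" where
  "merge_list [T] T"
| "merge_list Ts T' \<Longrightarrow> merge T T' U \<Longrightarrow> merge_list (T # Ts) U"

(* Projection, as a relation: proj G r T  means  G \<upharpoonleft> r = T (defined) *)
inductive proj :: "('r, 'l::linorder) gty \<Rightarrow> 'r \<Rightarrow> ('r, 'l) lty \<Rightarrow> bool" where
  "proj GEnd r LEnd"
| "proj (GVar t) r (LVar t)"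
| "proj G r T \<Longrightarrow> \<not> is_lvar T \<Longrightarrow> proj (GRec t G) r (LRec t T)"
| "proj G r T \<Longrightarrow> is_lvar T \<Longrightarrow> proj (GRec t G) r LEnd"
| "r = p \<Longrightarrow> finite (dom b) \<Longrightarrow>
   (\<forall>l. bt l = None \<longleftrightarrow> b l = None) \<Longrightarrow>
   (\<forall>l g T. b l = Some g \<and> bt l = Some T \<longrightarrow> proj g r T) \<Longrightarrow>
   proj (GMsg p q b) r (LSel q bt)"
| "r = q \<Longrightarrow> r \<noteq> p \<Longrightarrow> finite (dom b) \<Longrightarrow>
   (\<forall>l. bt l = None \<longleftrightarrow> b l = None) \<Longrightarrow>
   (\<forall>l g T. b l = Some g \<and> bt l = Some T \<longrightarrow> proj g r T) \<Longrightarrow>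
   proj (GMsg p q b) r (LBra p bt)"
| "r \<noteq> p \<Longrightarrow> r \<noteq> q \<Longrightarrow> finite (dom b) \<Longrightarrow>
   (\<forall>l g. b l = Some g \<longrightarrow> proj g r (Ts l)) \<Longrightarrow>
   merge_list (map Ts (sorted_list_of_set (dom b))) T \<Longrightarrow>
   proj (GMsg p q b) r T"
| "r = p \<Longrightarrow> finite (dom b) \<Longrightarrow>
   (\<forall>l. bt l = None \<longleftrightarrow> b l = None) \<Longrightarrow>
   (\<forall>l g T. b l = Some g \<and> bt l = Some T \<longrightarrow> proj g r T) \<Longrightarrow>
   proj (GVia p q s b) r (LRSel q s bt)"
| "r = q \<Longrightarrow> r \<noteq> p \<Longrightarrow> finite (dom b) \<Longrightarrow>
   (\<forall>l. bt l = None \<longleftrightarrow> b l = None) \<Longrightarrow>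
   (\<forall>l g T. b l = Some g \<and> bt l = Some T \<longrightarrow> proj g r T) \<Longrightarrow>
   proj (GVia p q s b) r (LRBra p s bt)"
| "r = s \<Longrightarrow> r \<noteq> p \<Longrightarrow> r \<noteq> q \<Longrightarrow> finite (dom b) \<Longrightarrow>
   (\<forall>l. bt l = None \<longleftrightarrow> b l = None) \<Longrightarrow>
   (\<forall>l g T. b l = Some g \<and> bt l = Some T \<longrightarrow> proj g r T) \<Longrightarrow>
   proj (GVia p q s b) r (LRoute p q bt)"
| "r \<noteq> p \<Longrightarrow> r \<noteq> q \<Longrightarrow> r \<noteq> s \<Longrightarrow> finite (dom b) \<Longrightarrow>
   (\<forall>l g. b l = Some g \<longrightarrow> proj g r (Ts l)) \<Longrightarrow>
   merge_list (map Ts (sorted_list_of_set (dom b))) T \<Longrightarrow>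
   proj (GVia p q s b) r T"

end

theory Submission
  imports Defs
begin

inductive rfree :: "('r, 'l) lty \<Rightarrow> bool" where
  "rfree LEnd"
| "rfree (LVar t)"
| "rfree T \<Longrightarrow> rfree (LRec t T)"
| "(\<forall>l x. b l = Some x \<longrightarrow> rfree x) \<Longrightarrow> rfree (LSel p b)"
| "(\<forall>l x. b l = Some x \<longrightarrow> rfree x) \<Longrightarrow> rfree (LBra p b)"

inductive_cases rfree_RBra: "rfree (LRBra p s b)"
inductive_cases rfree_RSel: "rfree (LRSel p s b)"
inductive_cases rfree_Route: "rfree (LRoute p s b)"
inductive_cases rfree_Bra: "rfree (LBra p b)"
inductive_cases rfree_Sel: "rfree (LSel p b)"

primrec dec :: "('r, 'l) lty \<Rightarrow> ('r, 'l) lty" where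
  "dec LEnd = LEnd"
| "dec (LVar t) = LVar t"
| "dec (LRec t T) = LRec t (dec T)"
| "dec (LSel p b) = LSel p (\<lambda>l. map_option dec (b l))"
| "dec (LBra p b) = LBra p (\<lambda>l. map_option dec (b l))"
| "dec (LRSel p s' b) = LSel p (\<lambda>l. map_option dec (b l))"
| "dec (LRBra p s' b) = LBra p (\<lambda>l. map_option dec (b l))"
| "dec (LRoute p p' b) = LRoute p p' (\<lambda>l. map_option dec (b l))"

lemma map_option_id_pt:
  assumes "\<And>x. b l = Some x \<Longrightarrow> f x = x"
  shows "map_option f (b l) = b l"
  using assms by (cases "b l") auto

lemma D1: "rfree x \<Longrightarrow> dec (enc_l r s x) = x"
proof (induction rule: rfree.induct)
  case (4 b p)
  then show ?case by (auto intro!: ext map_option_id_pt simp: option.map_comp)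
next
  case (5 b p)
  then show ?case by (auto intro!: ext map_option_id_pt simp: option.map_comp)
qed auto

lemma D2: "merge X Y Z \<Longrightarrow> merge (dec X) (dec Y) (dec Z)"
proof (induction rule: merge.induct)
  case (merge_refl T)
  then show ?case by (rule merge.merge_refl)
next
  case (merge_bra b1 b2 b p)
  show ?case
    apply simp
    apply (rule merge.merge_bra)
    subgoal using merge_bra.hyps(1) by auto
    subgoal using merge_bra.hyps(2) by auto
    subgoal using merge_bra.hyps(3) by auto
    subgoal
    proof (intro allI impI)
      fix l x y assume a: "map_option dec (b1 l) = Some x \<and> map_option dec (b2 l) = Some y"
      then obtain x0 y0 where "b1 l = Some x0" "b2 l = Some y0" "x = dec x0" "y = dec y0" by auto
      with merge_bra.IH show "\<exists>z. map_option dec (b l) = Some z \<and> merge x y z" by fastforce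
    qed
    done
next
  case (merge_rbra b1 b2 b p s)
  show ?case
    apply simp
    apply (rule merge.merge_bra)
    subgoal using merge_rbra.hyps(1) by auto
    subgoal using merge_rbra.hyps(2) by auto
    subgoal using merge_rbra.hyps(3) by auto
    subgoal
    proof (intro allI impI)
      fix l x y assume a: "map_option dec (b1 l) = Some x \<and> map_option dec (b2 l) = Some y"
      then obtain x0 y0 where "b1 l = Some x0" "b2 l = Some y0" "x = dec x0" "y = dec y0" by auto
      with merge_rbra.IH show "\<exists>z. map_option dec (b l) = Some z \<and> merge x y z" by fastforce
    qed
    done
qed

lemma D3: "merge X Y Z \<Longrightarrow> X = enc_l r s (dec X) \<Longrightarrow> Y = enc_l r s (dec Y) \<Longrightarrow> Z = enc_l r s (dec Z)"
proof (induction rule: merge.induct)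
  case (merge_refl T)
  then show ?case by simp
next
  case (merge_bra b1 b2 b p)
  from merge_bra.prems(1) have sp: "s = p \<or> s = r" by (simp split: if_splits)
  from merge_bra.prems have e1: "\<And>l. b1 l = map_option (enc_l r s \<circ> dec) (b1 l)"
    and e2: "\<And>l. b2 l = map_option (enc_l r s \<circ> dec) (b2 l)"
    using sp by (auto simp: option.map_comp fun_eq_iff)
  have "b l = map_option (enc_l r s \<circ> dec) (b l)" for l
  proof (cases "b1 l"; cases "b2 l")
    fix x y assume a: "b1 l = Some x" "b2 l = Some y"
    with merge_bra.IH obtain z where "b l = Some z" "x = enc_l r s (dec x) \<longrightarrow> y = enc_l r s (dec y) \<longrightarrow> z = enc_l r s (dec z)"
      by blast
    moreover have "x = enc_l r s (dec x)" "y = enc_l r s (dec y)" using e1[of l] e2[of l] a by auto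
    ultimately show ?thesis by simp
  qed (use merge_bra.hyps e1 e2 in \<open>metis\<close>)+
  then show ?case using sp by (auto simp: option.map_comp fun_eq_iff)
next
  case (merge_rbra b1 b2 b p s')
  from merge_rbra.prems(1) have sp: "\<not>(s = p \<or> s = r)" "s' = s" by (auto split: if_splits)
  from merge_rbra.prems have e1: "\<And>l. b1 l = map_option (enc_l r s \<circ> dec) (b1 l)"
    and e2: "\<And>l. b2 l = map_option (enc_l r s \<circ> dec) (b2 l)"
    using sp by (auto simp: option.map_comp fun_eq_iff)
  have "b l = map_option (enc_l r s \<circ> dec) (b l)" for l
  proof (cases "b1 l"; cases "b2 l")
    fix x y assume a: "b1 l = Some x" "b2 l = Some y"
    with merge_rbra.IH obtain z where "b l = Some z" "x = enc_l r s (dec x) \<longrightarrow> y = enc_l r s (dec y) \<longrightarrow> z = enc_l r s (dec z)"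
      by blast
    moreover have "x = enc_l r s (dec x)" "y = enc_l r s (dec y)" using e1[of l] e2[of l] a by auto
    ultimately show ?thesis by simp
  qed (use merge_rbra.hyps e1 e2 in \<open>metis\<close>)+
  then show ?case using sp by (auto simp: option.map_comp fun_eq_iff)
qed


lemma M1: "merge x y z \<Longrightarrow> merge (enc_l r s x) (enc_l r s y) (enc_l r s z)"
proof (induction rule: merge.induct)
  case (merge_refl T)
  then show ?case by (rule merge.merge_refl)
next
  case (merge_bra b1 b2 b p)
  have c4: "\<forall>l x y. map_option (enc_l r s) (b1 l) = Some x \<and> map_option (enc_l r s) (b2 l) = Some y \<longrightarrow>
      (\<exists>z. map_option (enc_l r s) (b l) = Some z \<and> merge x y z)"
  proof (intro allI impI)
    fix l x y assume a: "map_option (enc_l r s) (b1 l) = Some x \<and> map_option (enc_l r s) (b2 l) = Some y"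
    then obtain x0 y0 where h: "b1 l = Some x0" "b2 l = Some y0" "x = enc_l r s x0" "y = enc_l r s y0" by auto
    from merge_bra.IH h(1,2) obtain z0 where "b l = Some z0" "merge (enc_l r s x0) (enc_l r s y0) (enc_l r s z0)" by blast
    with h(3,4) show "\<exists>z. map_option (enc_l r s) (b l) = Some z \<and> merge x y z" by simp
  qed
  show ?case
  proof (cases "s = p \<or> s = r")
    case True
    have "merge (LBra p (\<lambda>l. map_option (enc_l r s) (b1 l))) (LBra p (\<lambda>l. map_option (enc_l r s) (b2 l))) (LBra p (\<lambda>l. map_option (enc_l r s) (b l)))"
      apply (rule merge.merge_bra)
      subgoal using merge_bra.hyps(1) by auto
      subgoal using merge_bra.hyps(2) by auto
      subgoal using merge_bra.hyps(3) by auto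
      subgoal using c4 by blast
      done
    then show ?thesis using True by simp
  next
    case False
    have "merge (LRBra p s (\<lambda>l. map_option (enc_l r s) (b1 l))) (LRBra p s (\<lambda>l. map_option (enc_l r s) (b2 l))) (LRBra p s (\<lambda>l. map_option (enc_l r s) (b l)))"
      apply (rule merge.merge_rbra)
      subgoal using merge_bra.hyps(1) by auto
      subgoal using merge_bra.hyps(2) by auto
      subgoal using merge_bra.hyps(3) by auto
      subgoal using c4 by blast
      done
    then show ?thesis using False by simp
  qed
next
  case (merge_rbra b1 b2 b p s')
  have c4: "\<forall>l x y. map_option (enc_l r s) (b1 l) = Some x \<and> map_option (enc_l r s) (b2 l) = Some y \<longrightarrow>
      (\<exists>z. map_option (enc_l r s) (b l) = Some z \<and> merge x y z)"
  proof (intro allI impI)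
    fix l x y assume a: "map_option (enc_l r s) (b1 l) = Some x \<and> map_option (enc_l r s) (b2 l) = Some y"
    then obtain x0 y0 where h: "b1 l = Some x0" "b2 l = Some y0" "x = enc_l r s x0" "y = enc_l r s y0" by auto
    from merge_rbra.IH h(1,2) obtain z0 where "b l = Some z0" "merge (enc_l r s x0) (enc_l r s y0) (enc_l r s z0)" by blast
    with h(3,4) show "\<exists>z. map_option (enc_l r s) (b l) = Some z \<and> merge x y z" by simp
  qed
  show ?case apply simp
      apply (rule merge.merge_rbra)
      subgoal using merge_rbra.hyps(1) by auto
      subgoal using merge_rbra.hyps(2) by auto
      subgoal using merge_rbra.hyps(3) by auto
      subgoal using c4 by blast
      done
qed

lemma M2: "merge X Y Z \<Longrightarrow> X = enc_l r s (dec X) \<Longrightarrow> Y = enc_l r s (dec Y) \<Longrightarrow>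
   merge (dec X) (dec Y) (dec Z) \<and> Z = enc_l r s (dec Z)"
proof -
  assume a: "merge X Y Z" "X = enc_l r s (dec X)" "Y = enc_l r s (dec Y)"
  show ?thesis using D2[OF a(1)] D3[OF a] by (rule conjI)
qed

lemma MLenc1: "merge_list Ts T \<Longrightarrow> merge_list (map (enc_l r s) Ts) (enc_l r s T)"
proof (induction rule: merge_list.induct)
  case (1 T) show ?case by simp (rule merge_list.intros(1))
next
  case (2 Ts T' T U)
  show ?case by simp (rule merge_list.intros(2)[OF 2(3) M1[OF 2(2)]])
qed

lemma MLenc2: "merge_list Us U \<Longrightarrow> (\<forall>X\<in>set Us. X = enc_l r s (dec X)) \<Longrightarrow>
   merge_list (map dec Us) (dec U) \<and> U = enc_l r s (dec U)"
proof (induction rule: merge_list.induct)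
  case (1 T)
  then show ?case by (auto intro: merge_list.intros)
next
  case (2 Ts T' T U)
  then have "merge_list (map dec Ts) (dec T')" "T' = enc_l r s (dec T')" by auto
  moreover have "merge (dec T) (dec T') (dec U) \<and> U = enc_l r s (dec U)"
    using M2[OF 2(2)] 2(4) calculation(2) by auto
  ultimately show ?case by (auto intro: merge_list.intros)
qed

lemma merge_rfree: "merge x y z \<Longrightarrow> rfree x \<Longrightarrow> rfree y \<Longrightarrow> rfree z"
proof (induction rule: merge.induct)
  case (merge_refl T)
  then show ?case by simp
next
  case (merge_bra b1 b2 b p)
  have h1: "\<forall>l x. b1 l = Some x \<longrightarrow> rfree x" using merge_bra.prems(1) by (cases rule: rfree.cases) auto
  have h2: "\<forall>l x. b2 l = Some x \<longrightarrow> rfree x" using merge_bra.prems(2) by (cases rule: rfree.cases) auto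
  have "\<forall>l w. b l = Some w \<longrightarrow> rfree w"
  proof (intro allI impI)
    fix l w assume w: "b l = Some w"
    show "rfree w"
    proof (cases "b1 l")
      case None
      show ?thesis
      proof (cases "b2 l")
        case None
        with \<open>b1 l = None\<close> merge_bra.hyps(1) w show ?thesis by simp
      next
        case (Some y)
        with \<open>b1 l = None\<close> merge_bra.hyps(3) w h2 show ?thesis by simp
      qed
    next
      case (Some x)
      show ?thesis
      proof (cases "b2 l")
        case None
        with \<open>b1 l = Some x\<close> merge_bra.hyps(2) w h1 show ?thesis by simp
      next
        case (Some y)
        with \<open>b1 l = Some x\<close> merge_bra.IH obtain z where "b l = Some z" "rfree x \<longrightarrow> rfree y \<longrightarrow> rfree z"
          by blast
        with \<open>b1 l = Some x\<close> \<open>b2 l = Some y\<close> w h1 h2 show ?thesis by simp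
      qed
    qed
  qed
  then show ?case by (rule rfree.intros)
next
  case (merge_rbra b1 b2 b p s)
  from merge_rbra.prems(1) show ?case by (rule rfree_RBra)
qed

lemma MLrfree: "merge_list Ts T \<Longrightarrow> \<forall>x\<in>set Ts. rfree x \<Longrightarrow> rfree T"
proof (induction rule: merge_list.induct)
  case (1 T) then show ?case by simp
next
  case (2 Ts T' T U)
  then show ?case using merge_rfree[OF 2(2)] by simp
qed

inductive_cases can_Msg: "canonical (GMsg p q b)"
inductive_cases can_Via: "canonical (GVia p q s b)"
inductive_cases can_Rec: "canonical (GRec t G)"

lemma can_Via_F: "canonical (GVia p q s b) \<Longrightarrow> False"
  by (erule can_Via)

lemma can_Via_eq: "canonical (GVia p q s b) = False"
  using can_Via_F by auto

lemma proj_rfree: "proj G r T \<Longrightarrow> canonical G \<Longrightarrow> rfree T"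
proof (induction rule: proj.induct)
  case (1 r) show ?case by (rule rfree.intros)
next
  case (2 t r) show ?case by (rule rfree.intros)
next
  case (3 G r T t) then show ?case by (auto intro: rfree.intros elim: can_Rec)
next
  case (4 G r T t) show ?case by (rule rfree.intros)
next
  case (5 r p b bt q)
  have "\<forall>l x. bt l = Some x \<longrightarrow> rfree x"
  proof (intro allI impI)
    fix l x assume a: "bt l = Some x"
    then obtain g where g: "b l = Some g" using 5(3) by (metis option.distinct(1) not_None_eq)
    have "canonical g" using 5(5) g by (auto elim: can_Msg)
    then show "rfree x" using 5(4) g a by blast
  qed
  then show ?case by (rule rfree.intros)
next
  case (6 r q p b bt)
  have "\<forall>l x. bt l = Some x \<longrightarrow> rfree x"
  proof (intro allI impI)
    fix l x assume a: "bt l = Some x"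
    then obtain g where g: "b l = Some g" using 6(4) by (metis option.distinct(1) not_None_eq)
    have "canonical g" using 6(6) g by (auto elim: can_Msg)
    then show "rfree x" using 6(5) g a by blast
  qed
  then show ?case by (rule rfree.intros)
next
  case (7 r p q b Ts T)
  have "\<forall>x\<in>set (map Ts (sorted_list_of_set (dom b))). rfree x"
  proof
    fix x assume "x \<in> set (map Ts (sorted_list_of_set (dom b)))"
    then obtain l where l: "l \<in> dom b" "x = Ts l" using 7(3) by auto
    then obtain g where g: "b l = Some g" by auto
    have "canonical g" using 7(6) g by (auto elim: can_Msg)
    then show "rfree x" using 7 g l by fastforce
  qed
  then show ?case by (rule MLrfree[OF 7(4)])
qed (simp_all only: can_Via_eq)


lemma is_lvar_enc: "is_lvar (enc_l r s T) = is_lvar T"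
  by (cases T) auto

lemma dom_map_opt: "dom (\<lambda>l. map_option f (b l)) = dom b"
  by (auto simp: dom_def)

lemma none_map: "\<forall>l. bt l = None \<longleftrightarrow> b l = None \<Longrightarrow>
  \<forall>l. map_option h (bt l) = None \<longleftrightarrow> map_option f (b l) = None"
  by simp

lemma pairs_map:
  assumes "\<forall>l g T. b l = Some g \<and> bt l = Some T \<longrightarrow> P g T"
    and "\<And>g T. P g T \<Longrightarrow> Q (f g) (h T)"
  shows "\<forall>l g T. map_option f (b l) = Some g \<and> map_option h (bt l) = Some T \<longrightarrow> Q g T"
  using assms by fastforce

inductive_cases can_GMsg: "canonical (GMsg p q b)"

lemma bwd: "proj G r T \<Longrightarrow> canonical G \<Longrightarrow> r \<noteq> s \<Longrightarrow> proj (enc_g s G) r (enc_l r s T)"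
proof (induction rule: proj.induct)
  case (1 r) then show ?case by (simp add: proj.intros)
next
  case (2 t r) then show ?case by (simp add: proj.intros)
next
  case (3 G r T t)
  have "canonical G" using 3(4) by (rule can_Rec)
  then have "proj (enc_g s G) r (enc_l r s T)" using 3 by blast
  moreover have "\<not> is_lvar (enc_l r s T)" using 3(2) by (simp add: is_lvar_enc)
  ultimately show ?case by (simp add: proj.intros(3))
next
  case (4 G r T t)
  have "canonical G" using 4(4) by (rule can_Rec)
  then have "proj (enc_g s G) r (enc_l r s T)" using 4 by blast
  moreover have "is_lvar (enc_l r s T)" using 4(2) by (simp add: is_lvar_enc)
  ultimately show ?case using proj.intros(4) by fastforce
next
  case (5 r p b bt q)
  have pq: "p \<noteq> q" and cb: "\<forall>l g. b l = Some g \<longrightarrow> canonical g" using 5(5) by (auto elim: can_GMsg)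
  have IH: "\<forall>l g T. b l = Some g \<and> bt l = Some T \<longrightarrow> proj (enc_g s g) r (enc_l r s T)"
    using 5(4) cb 5(6) by blast
  have pm: "\<forall>l g T. map_option (enc_g s) (b l) = Some g \<and> map_option (enc_l r s) (bt l) = Some T \<longrightarrow> proj g r T"
    by (rule pairs_map[OF IH]) simp
  have nm: "\<forall>l. map_option (enc_l r s) (bt l) = None \<longleftrightarrow> map_option (enc_g s) (b l) = None"
    using 5(3) by simp
  have fin: "finite (dom (\<lambda>l. map_option (enc_g s) (b l)))" using 5(2) by (simp add: dom_map_opt)
  show ?case
  proof (cases "s = p \<or> s = q")
    case True
    then have "s = q" using 5(1) 5(6) by auto
    moreover have "proj (GMsg p q (\<lambda>l. map_option (enc_g s) (b l))) r (LSel q (\<lambda>l. map_option (enc_l r s) (bt l)))"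
      by (rule proj.intros(5)[OF 5(1) fin nm pm])
    ultimately show ?thesis using True 5(1) 5(6) by simp
  next
    case False
    moreover have "proj (GVia p q s (\<lambda>l. map_option (enc_g s) (b l))) r (LRSel q s (\<lambda>l. map_option (enc_l r s) (bt l)))"
      by (rule proj.intros(8)[OF 5(1) fin nm pm])
    ultimately show ?thesis using 5(1) 5(6) by simp
  qed
next
  case (6 r q p b bt)
  have pq: "p \<noteq> q" and cb: "\<forall>l g. b l = Some g \<longrightarrow> canonical g" using 6(6) by (auto elim: can_GMsg)
  have IH: "\<forall>l g T. b l = Some g \<and> bt l = Some T \<longrightarrow> proj (enc_g s g) r (enc_l r s T)"
    using 6(5) cb 6(7) by blast
  have pm: "\<forall>l g T. map_option (enc_g s) (b l) = Some g \<and> map_option (enc_l r s) (bt l) = Some T \<longrightarrow> proj g r T"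
    by (rule pairs_map[OF IH]) simp
  have nm: "\<forall>l. map_option (enc_l r s) (bt l) = None \<longleftrightarrow> map_option (enc_g s) (b l) = None"
    using 6(4) by simp
  have fin: "finite (dom (\<lambda>l. map_option (enc_g s) (b l)))" using 6(3) by (simp add: dom_map_opt)
  show ?case
  proof (cases "s = p \<or> s = q")
    case True
    then have "s = p" using 6(1) 6(7) by auto
    moreover have "proj (GMsg p q (\<lambda>l. map_option (enc_g s) (b l))) r (LBra p (\<lambda>l. map_option (enc_l r s) (bt l)))"
      by (rule proj.intros(6)[OF 6(1,2) fin nm pm])
    ultimately show ?thesis using True 6(1,2) 6(7) by simp
  next
    case False
    moreover have "proj (GVia p q s (\<lambda>l. map_option (enc_g s) (b l))) r (LRBra p s (\<lambda>l. map_option (enc_l r s) (bt l)))"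
      by (rule proj.intros(9)[OF 6(1,2) fin nm pm])
    ultimately show ?thesis using 6(1,2) 6(7) by simp
  qed
next
  case (7 r p q b Ts T)
  have cb: "\<forall>l g. b l = Some g \<longrightarrow> canonical g" using \<open>canonical (GMsg p q b)\<close> by (auto elim: can_GMsg)
  have IH: "\<forall>l g. b l = Some g \<longrightarrow> proj (enc_g s g) r (enc_l r s (Ts l))" using 7 cb by blast
  define b' where "b' = (\<lambda>l. map_option (enc_g s) (b l))"
  have pm: "\<forall>l g. b' l = Some g \<longrightarrow> proj g r ((\<lambda>l. enc_l r s (Ts l)) l)" using IH by (auto simp: b'_def)
  have fin: "finite (dom b')" using \<open>finite (dom b)\<close> by (simp add: b'_def dom_map_opt)
  have ml: "merge_list (map (\<lambda>l. enc_l r s (Ts l)) (sorted_list_of_set (dom b'))) (enc_l r s T)"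
    using MLenc1[OF \<open>merge_list (map Ts (sorted_list_of_set (dom b))) T\<close>, of r s]
    by (simp add: b'_def dom_map_opt comp_def)
  show ?case
  proof (cases "s = p \<or> s = q")
    case True
    have "proj (GMsg p q b') r (enc_l r s T)" by (rule proj.intros(7)[OF \<open>r\<noteq>p\<close> \<open>r\<noteq>q\<close> fin pm ml])
    then show ?thesis using True by (simp add: b'_def)
  next
    case False
    have "proj (GVia p q s b') r (enc_l r s T)" by (rule proj.intros(11)[OF \<open>r\<noteq>p\<close> \<open>r\<noteq>q\<close> \<open>r\<noteq>s\<close> fin pm ml])
    then show ?thesis using False by (simp add: b'_def)
  qed
qed (simp_all only: can_Via_eq)


lemma sel_case:
  assumes IHb: "\<forall>l g. b l = Some g \<longrightarrow> (\<forall>T. proj (enc_g s g) r T \<longrightarrow> (\<exists>T'. proj g r T' \<and> T = enc_l r s T'))"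
    and nm: "\<forall>l. bt l = None \<longleftrightarrow> map_option (enc_g s) (b l) = None"
    and pr: "\<forall>l g T. map_option (enc_g s) (b l) = Some g \<and> bt l = Some T \<longrightarrow> proj g r T"
  shows "\<exists>bt0. (\<forall>l. bt0 l = None \<longleftrightarrow> b l = None) \<and> (\<forall>l g T'. b l = Some g \<and> bt0 l = Some T' \<longrightarrow> proj g r T')
     \<and> bt = (\<lambda>l. map_option (enc_l r s) (bt0 l))"
proof -
  have key: "\<exists>T'. proj (the (b l)) r T' \<and> T = enc_l r s T'" if bl: "bt l = Some T" for l T
  proof -
    have "b l \<noteq> None" using spec[OF nm, of l] bl by simp
    then obtain g where g: "b l = Some g" by blast
    have "proj (enc_g s g) r T" using pr[rule_format, of l "enc_g s g" T] g bl by simp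
    then show ?thesis using IHb g by auto
  qed
  define bt0 where "bt0 = (\<lambda>l. case bt l of None \<Rightarrow> None | Some T \<Rightarrow> Some (SOME T'. proj (the (b l)) r T' \<and> T = enc_l r s T'))"
  have sp: "proj (the (b l)) r (SOME T'. proj (the (b l)) r T' \<and> T = enc_l r s T') \<and> T = enc_l r s (SOME T'. proj (the (b l)) r T' \<and> T = enc_l r s T')"
    if "bt l = Some T" for l T
    using someI_ex[OF key[OF that]] .
  have nm': "\<And>l. (bt l = None) = (b l = None)" using nm by simp
  have 1: "\<forall>l. bt0 l = None \<longleftrightarrow> b l = None"
  proof
    fix l show "bt0 l = None \<longleftrightarrow> b l = None" using nm'[of l] by (cases "bt l") (simp_all add: bt0_def)
  qed
  have 2: "\<forall>l g T'. b l = Some g \<and> bt0 l = Some T' \<longrightarrow> proj g r T'"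
  proof (intro allI impI)
    fix l g T' assume a: "b l = Some g \<and> bt0 l = Some T'"
    then obtain T where T: "bt l = Some T" by (auto simp: bt0_def split: option.splits)
    from a have a1: "b l = Some g" and a2: "bt0 l = Some T'" by auto
    from T a1 a2 have "T' = (SOME T'. proj g r T' \<and> T = enc_l r s T')" by (simp add: bt0_def)
    then show "proj g r T'" using sp[OF T] a by simp
  qed
  have 3: "bt = (\<lambda>l. map_option (enc_l r s) (bt0 l))"
  proof
    fix l show "bt l = map_option (enc_l r s) (bt0 l)"
    proof (cases "bt l")
      case None then show ?thesis by (simp add: bt0_def)
    next
      case (Some T) then show ?thesis using sp[OF Some] by (simp add: bt0_def)
    qed
  qed
  show ?thesis using 1 2 3 by blast
qed

lemma merge_case:
  assumes IHb: "\<forall>l g. b l = Some g \<longrightarrow> (\<forall>T. proj (enc_g s g) r T \<longrightarrow> (\<exists>T'. proj g r T' \<and> T = enc_l r s T'))"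
    and cb: "\<forall>l g. b l = Some g \<longrightarrow> canonical g"
    and pr: "\<forall>l g. map_option (enc_g s) (b l) = Some g \<longrightarrow> proj g r (Ts l)"
    and ml: "merge_list (map Ts (sorted_list_of_set (dom (\<lambda>l. map_option (enc_g s) (b l))))) T"
  shows "\<exists>Ts0 T'. (\<forall>l g. b l = Some g \<longrightarrow> proj g r (Ts0 l)) \<and> merge_list (map Ts0 (sorted_list_of_set (dom b))) T' \<and> T = enc_l r s T'"
proof -
  have key: "\<exists>T'. proj (the (b l)) r T' \<and> Ts l = enc_l r s T'" if lm: "l \<in> dom b" for l
  proof -
    obtain g where g: "b l = Some g" using lm by blast
    have "proj (enc_g s g) r (Ts l)" using pr g by auto
    then show ?thesis using IHb g by auto
  qed
  define Ts0 where "Ts0 = (\<lambda>l. SOME T'. proj (the (b l)) r T' \<and> Ts l = enc_l r s T')"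
  have sp: "proj (the (b l)) r (Ts0 l) \<and> Ts l = enc_l r s (Ts0 l)" if "l \<in> dom b" for l
    unfolding Ts0_def using someI_ex[OF key[OF that]] .
  have P1: "\<forall>l g. b l = Some g \<longrightarrow> proj g r (Ts0 l)"
    using sp by (metis domI option.sel)
  have rf: "rfree (Ts0 l)" if lm: "l \<in> dom b" for l
  proof -
    obtain g where g: "b l = Some g" using lm by blast
    show ?thesis using proj_rfree[of g r "Ts0 l"] P1 cb g by blast
  qed
  have fin: "set (sorted_list_of_set (dom b)) \<subseteq> dom b" by (cases "finite (dom b)") auto
  have eqm0: "map Ts (sorted_list_of_set (dom b)) = map (\<lambda>l. enc_l r s (Ts0 l)) (sorted_list_of_set (dom b))"
  proof (rule map_cong[OF refl])
    fix x assume "x \<in> set (sorted_list_of_set (dom b))"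
    then have "x \<in> dom b" using fin by blast
    then show "Ts x = enc_l r s (Ts0 x)" using sp by blast
  qed
  have eqm: "map Ts (sorted_list_of_set (dom b)) = map (enc_l r s) (map Ts0 (sorted_list_of_set (dom b)))"
    using eqm0 by simp
  have ml2: "merge_list (map (enc_l r s) (map Ts0 (sorted_list_of_set (dom b)))) T"
    using ml eqm by (simp add: dom_map_opt)
  have rf2: "\<And>x. x \<in> set (sorted_list_of_set (dom b)) \<Longrightarrow> dec (enc_l r s (Ts0 x)) = Ts0 x"
  proof -
    fix x assume "x \<in> set (sorted_list_of_set (dom b))"
    then have "x \<in> dom b" using fin by blast
    then show "dec (enc_l r s (Ts0 x)) = Ts0 x" by (rule D1[OF rf])
  qed
  have ok: "\<forall>X\<in>set (map (enc_l r s) (map Ts0 (sorted_list_of_set (dom b)))). X = enc_l r s (dec X)"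
  proof
    fix X assume "X \<in> set (map (enc_l r s) (map Ts0 (sorted_list_of_set (dom b))))"
    then have "X \<in> (\<lambda>x. enc_l r s (Ts0 x)) ` set (sorted_list_of_set (dom b))"
      by (simp only: map_map set_map comp_def)
    then obtain x where "x \<in> set (sorted_list_of_set (dom b))" "X = enc_l r s (Ts0 x)"
      by blast
    then show "X = enc_l r s (dec X)" using rf2[of x] by simp
  qed
  have dd: "map dec (map (enc_l r s) (map Ts0 (sorted_list_of_set (dom b)))) = map Ts0 (sorted_list_of_set (dom b))"
    unfolding map_map comp_def by (rule map_cong[OF refl]) (rule rf2)
  from MLenc2[OF ml2 ok] have "merge_list (map Ts0 (sorted_list_of_set (dom b))) (dec T) \<and> T = enc_l r s (dec T)"
    unfolding dd .
  then show ?thesis using P1 by (intro exI[of _ Ts0] exI[of _ "dec T"]) simp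
qed


inductive_cases proj_End: "proj GEnd r T"
inductive_cases proj_Var: "proj (GVar t) r T"
inductive_cases proj_Rec: "proj (GRec t G) r T"
inductive_cases proj_Msg: "proj (GMsg p q b) r T"
inductive_cases proj_Via: "proj (GVia p q s b) r T"

lemma fwd:
  assumes rs: "r \<noteq> s"
  shows "canonical G \<Longrightarrow> \<forall>T. proj (enc_g s G) r T \<longrightarrow> (\<exists>T'. proj G r T' \<and> T = enc_l r s T')"
proof (induction G rule: canonical.induct)
  case 1
  show ?case
  proof (intro allI impI)
    fix T assume "proj (enc_g s GEnd) r T"
    then have "T = LEnd" by (auto elim: proj_End)
    then show "\<exists>T'. proj GEnd r T' \<and> T = enc_l r s T'" by (auto intro: proj.intros)
  qed
next
  case (2 t)
  show ?case
  proof (intro allI impI)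
    fix T assume "proj (enc_g s (GVar t)) r T"
    then have "T = LVar t" by (auto elim: proj_Var)
    then show "\<exists>T'. proj (GVar t) r T' \<and> T = enc_l r s T'" by (auto intro: proj.intros)
  qed
next
  case (3 G t)
  have IH: "\<forall>T. proj (enc_g s G) r T \<longrightarrow> (\<exists>T'. proj G r T' \<and> T = enc_l r s T')"
    by (rule "3.IH")
  show ?case
  proof (intro allI impI)
    fix T assume "proj (enc_g s (GRec t G)) r T"
    then have pr: "proj (GRec t (enc_g s G)) r T" by simp
    show "\<exists>T'. proj (GRec t G) r T' \<and> T = enc_l r s T'"
    proof (rule proj_Rec[OF pr])
      fix T1 assume h: "T = LRec t T1" "proj (enc_g s G) r T1" "\<not> is_lvar T1"
      from IH h(2) obtain T1' where "proj G r T1'" "T1 = enc_l r s T1'" by blast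
      moreover have "\<not> is_lvar T1'" using h(3) calculation(2) by (simp add: is_lvar_enc)
      ultimately show ?thesis using h(1) by (auto intro: proj.intros(3))
    next
      fix T1 assume h: "T = LEnd" "proj (enc_g s G) r T1" "is_lvar T1"
      from IH h(2) obtain T1' where "proj G r T1'" "T1 = enc_l r s T1'" by blast
      moreover have "is_lvar T1'" using h(3) calculation(2) by (simp add: is_lvar_enc)
      ultimately have "proj (GRec t G) r LEnd" by (meson proj.intros(4))
      then show ?thesis using h(1) by auto
    qed
  qed
next
  case (4 p q b)
  have pq: "p \<noteq> q" by (rule 4(1))
  have fin: "finite (dom b)" by (rule 4(3))
  have IHb: "\<forall>l g. b l = Some g \<longrightarrow> (\<forall>T. proj (enc_g s g) r T \<longrightarrow> (\<exists>T'. proj g r T' \<and> T = enc_l r s T'))"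
    using 4(4) by simp
  have cb: "\<forall>l g. b l = Some g \<longrightarrow> canonical g" using 4(4) by simp
  show ?case
  proof (intro allI impI)
    fix T assume pe: "proj (enc_g s (GMsg p q b)) r T"
    show "\<exists>T'. proj (GMsg p q b) r T' \<and> T = enc_l r s T'"
    proof (cases "s = p \<or> s = q")
      case True
      then have pr: "proj (GMsg p q (\<lambda>l. map_option (enc_g s) (b l))) r T" using pe by simp
      show ?thesis
      proof (rule proj_Msg[OF pr])
        fix bt assume h: "r = p" "T = LSel q bt" "finite (dom (\<lambda>l. map_option (enc_g s) (b l)))"
          "\<forall>l. (bt l = None) = (map_option (enc_g s) (b l) = None)"
          "\<forall>l g T. map_option (enc_g s) (b l) = Some g \<and> bt l = Some T \<longrightarrow> proj g p T"
        have h5: "\<forall>l g T. map_option (enc_g s) (b l) = Some g \<and> bt l = Some T \<longrightarrow> proj g r T"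
          using h(5) h(1) by simp
        obtain bt0 where b1: "\<forall>l. bt0 l = None \<longleftrightarrow> b l = None"
          and b2: "\<forall>l g T'. b l = Some g \<and> bt0 l = Some T' \<longrightarrow> proj g r T'"
          and b3: "bt = (\<lambda>l. map_option (enc_l r s) (bt0 l))"
          using sel_case[OF IHb h(4) h5] by blast
        have "proj (GMsg p q b) r (LSel q bt0)" by (rule proj.intros(5)[OF h(1) fin b1 b2])
        moreover have "s = q" using True h(1) rs by auto
        ultimately show ?thesis using h(2) b3 by auto
      next
        fix bt assume h: "r = q" "T = LBra p bt" "q \<noteq> p" "finite (dom (\<lambda>l. map_option (enc_g s) (b l)))"
          "\<forall>l. (bt l = None) = (map_option (enc_g s) (b l) = None)"
          "\<forall>l g T. map_option (enc_g s) (b l) = Some g \<and> bt l = Some T \<longrightarrow> proj g q T"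
        have h6: "\<forall>l g T. map_option (enc_g s) (b l) = Some g \<and> bt l = Some T \<longrightarrow> proj g r T"
          using h(6) h(1) by simp
        have rp: "r \<noteq> p" using h(1) h(3) by simp
        obtain bt0 where b1: "\<forall>l. bt0 l = None \<longleftrightarrow> b l = None"
          and b2: "\<forall>l g T'. b l = Some g \<and> bt0 l = Some T' \<longrightarrow> proj g r T'"
          and b3: "bt = (\<lambda>l. map_option (enc_l r s) (bt0 l))"
          using sel_case[OF IHb h(5) h6] by blast
        have "proj (GMsg p q b) r (LBra p bt0)" by (rule proj.intros(6)[OF h(1) rp fin b1 b2])
        moreover have "s = p" using True h(1) rs by auto
        ultimately show ?thesis using h(2) b3 by auto
      next
        fix Ts assume h: "r \<noteq> p" "r \<noteq> q" "finite (dom (\<lambda>l. map_option (enc_g s) (b l)))"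
          "\<forall>l g. map_option (enc_g s) (b l) = Some g \<longrightarrow> proj g r (Ts l)"
          "merge_list (map Ts (sorted_list_of_set (dom (\<lambda>l. map_option (enc_g s) (b l))))) T"
        obtain Ts0 T' where c1: "\<forall>l g. b l = Some g \<longrightarrow> proj g r (Ts0 l)"
          and c2: "merge_list (map Ts0 (sorted_list_of_set (dom b))) T'" and c3: "T = enc_l r s T'"
          using merge_case[OF IHb cb h(4) h(5)] by blast
        have "proj (GMsg p q b) r T'" by (rule proj.intros(7)[OF h(1) h(2) fin c1 c2])
        then show ?thesis using c3 by blast
      qed
    next
      case False
      then have pr: "proj (GVia p q s (\<lambda>l. map_option (enc_g s) (b l))) r T" using pe by simp
      show ?thesis
      proof (rule proj_Via[OF pr])
        fix bt assume h: "r = p" "T = LRSel q s bt" "finite (dom (\<lambda>l. map_option (enc_g s) (b l)))"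
          "\<forall>l. (bt l = None) = (map_option (enc_g s) (b l) = None)"
          "\<forall>l g T. map_option (enc_g s) (b l) = Some g \<and> bt l = Some T \<longrightarrow> proj g p T"
        have h5: "\<forall>l g T. map_option (enc_g s) (b l) = Some g \<and> bt l = Some T \<longrightarrow> proj g r T"
          using h(5) h(1) by simp
        obtain bt0 where b1: "\<forall>l. bt0 l = None \<longleftrightarrow> b l = None"
          and b2: "\<forall>l g T'. b l = Some g \<and> bt0 l = Some T' \<longrightarrow> proj g r T'"
          and b3: "bt = (\<lambda>l. map_option (enc_l r s) (bt0 l))"
          using sel_case[OF IHb h(4) h5] by blast
        have "proj (GMsg p q b) r (LSel q bt0)" by (rule proj.intros(5)[OF h(1) fin b1 b2])
        then show ?thesis using h(1,2) b3 False rs by auto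
      next
        fix bt assume h: "r = q" "T = LRBra p s bt" "q \<noteq> p" "finite (dom (\<lambda>l. map_option (enc_g s) (b l)))"
          "\<forall>l. (bt l = None) = (map_option (enc_g s) (b l) = None)"
          "\<forall>l g T. map_option (enc_g s) (b l) = Some g \<and> bt l = Some T \<longrightarrow> proj g q T"
        have h6: "\<forall>l g T. map_option (enc_g s) (b l) = Some g \<and> bt l = Some T \<longrightarrow> proj g r T"
          using h(6) h(1) by simp
        have rp: "r \<noteq> p" using h(1) h(3) by simp
        obtain bt0 where b1: "\<forall>l. bt0 l = None \<longleftrightarrow> b l = None"
          and b2: "\<forall>l g T'. b l = Some g \<and> bt0 l = Some T' \<longrightarrow> proj g r T'"
          and b3: "bt = (\<lambda>l. map_option (enc_l r s) (bt0 l))"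
          using sel_case[OF IHb h(5) h6] by blast
        have "proj (GMsg p q b) r (LBra p bt0)" by (rule proj.intros(6)[OF h(1) rp fin b1 b2])
        then show ?thesis using h(1,2) b3 False rs by auto
      next
        fix bt assume "r = s"
        then show ?thesis using rs by simp
      next
        fix Ts assume h: "r \<noteq> p" "r \<noteq> q" "r \<noteq> s" "finite (dom (\<lambda>l. map_option (enc_g s) (b l)))"
          "\<forall>l g. map_option (enc_g s) (b l) = Some g \<longrightarrow> proj g r (Ts l)"
          "merge_list (map Ts (sorted_list_of_set (dom (\<lambda>l. map_option (enc_g s) (b l))))) T"
        obtain Ts0 T' where c1: "\<forall>l g. b l = Some g \<longrightarrow> proj g r (Ts0 l)"
          and c2: "merge_list (map Ts0 (sorted_list_of_set (dom b))) T'" and c3: "T = enc_l r s T'"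
          using merge_case[OF IHb cb h(5) h(6)] by blast
        have "proj (GMsg p q b) r T'" by (rule proj.intros(7)[OF h(1) h(2) fin c1 c2])
        then show ?thesis using c3 by blast
      qed
    qed
  qed
qed

theorem lemma4p10:
  fixes r s :: 'r and G :: "('r, 'l::linorder) gty" and T :: "('r, 'l) lty"
  assumes "r \<noteq> s" and "canonical G"
  shows "proj (enc_g s G) r T \<longleftrightarrow> (\<exists>T'. proj G r T' \<and> T = enc_l r s T')"
proof
  assume "proj (enc_g s G) r T"
  then show "\<exists>T'. proj G r T' \<and> T = enc_l r s T'" using fwd[OF assms(1) assms(2)] by blast
next
  assume "\<exists>T'. proj G r T' \<and> T = enc_l r s T'"
  then obtain T' where "proj G r T'" "T = enc_l r s T'" by blast
  then show "proj (enc_g s G) r T" using bwd[OF _ assms(2) assms(1)] by blast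
qed

end
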